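(* Let $G$ be an oriented graph on $[n]$ with $|\mathcal{P}(G)|\ge 2$. Then there exist $\sigma,\rho\in\mathcal{P}(G)$ such that \[d_\ell(\sigma,\rho)=\max_{1\le i\le n}\{\,n-|R(i)|-|R^{-1}(i)|-1\,\}.\]
   Context: Write a permutation $\sigma\in S_n$ as $\sigma=\sigma_1\cdots\sigma_n$. A permutation $\sigma$ satisfies an oriented graph $G=([n],E)$ if $\sigma_u>\sigma_v$ for every oriented edge $u\to v\in E$; $\mathcal{P}(G)$ is the set of permutations satisfying $G$. Write $u\rightsquigarrow v$ if there is an oriented path from $u$ to $v$ in $G$. For a vertex $v$, $R(v)=\{u\in[n]\setminus\{v\}: v\rightsquigarrow u\}$ and $R^{-1}(v)=\{u\in[n]\setminus\{v\}: u\rightsquigarrow v\}$. The $\ell_\infty$-metric is $d_\ell(\sigma,\rho)=\max_{1\le i\le n}|\sigma_i-\rho_i|$. *)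

theory Defs
  imports "HOL-Combinatorics.Permutations"
begin

definition oriented_graph :: "nat \<Rightarrow> (nat \<times> nat) set \<Rightarrow> bool" where
  "oriented_graph n E \<longleftrightarrow> E \<subseteq> {1..n} \<times> {1..n}
     \<and> (\<forall>u v. (u, v) \<in> E \<longrightarrow> u \<noteq> v \<and> (v, u) \<notin> E)"

text \<open>Permutations of [n] are functions permuting {1..n} (identity outside);
  sigma i is the i-th entry sigma_i.\<close>
definition satisfying_perms :: "nat \<Rightarrow> (nat \<times> nat) set \<Rightarrow> (nat \<Rightarrow> nat) set" where
  "satisfying_perms n E = {\<sigma>. \<sigma> permutes {1..n} \<and> (\<forall>(u, v) \<in> E. \<sigma> u > \<sigma> v)}"

definition reach :: "nat \<Rightarrow> (nat \<times> nat) set \<Rightarrow> nat \<Rightarrow> nat set" where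
  "reach n E v = {u \<in> {1..n} - {v}. (v, u) \<in> E\<^sup>+}"

definition reach_inv :: "nat \<Rightarrow> (nat \<times> nat) set \<Rightarrow> nat \<Rightarrow> nat set" where
  "reach_inv n E v = {u \<in> {1..n} - {v}. (u, v) \<in> E\<^sup>+}"

definition d_linf :: "nat \<Rightarrow> (nat \<Rightarrow> nat) \<Rightarrow> (nat \<Rightarrow> nat) \<Rightarrow> int" where
  "d_linf n \<sigma> \<rho> = Max ((\<lambda>i. \<bar>int (\<sigma> i) - int (\<rho> i)\<bar>) ` {1..n})"

end

theory Submission
  imports Defs
begin

lemma max_elem:
  assumes "finite S" "S \<noteq> {}" "trans r" "\<forall>x. (x,x)\<notin>r"
  shows "\<exists>m\<in>S. \<forall>u\<in>S. (u,m)\<notin>r"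
proof -
  let ?r = "r \<inter> S \<times> S"
  have fin: "finite ?r" using assms(1) by (simp add: finite_Int)
  have "?r\<^sup>+ \<subseteq> r\<^sup>+" using trancl_mono by blast
  also have "r\<^sup>+ = r" using assms(3) by simp
  finally have "acyclic ?r" using assms(4) unfolding acyclic_def by blast
  hence "wf ?r" using fin finite_acyclic_wf by blast
  then obtain m where "m \<in> S" "\<And>y. (y,m) \<in> ?r \<Longrightarrow> y \<notin> S"
    using assms(2) wfE_min' by metis
  thus ?thesis by blast
qed

lemma linext:
  assumes "finite S" "trans r" "\<forall>x. (x,x)\<notin>r"
  shows "\<exists>f. bij_betw f S {k+1..k+card S} \<and> (\<forall>u\<in>S. \<forall>v\<in>S. (u,v)\<in>r \<longrightarrow> f v < f u)"
  using assms
proof (induct "card S" arbitrary: S)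
  case 0
  then show ?case by (auto simp: bij_betw_def)
next
  case (Suc m S)
  then have "S \<noteq> {}" by auto
  then obtain m0 where m0: "m0 \<in> S" "\<forall>u\<in>S. (u,m0)\<notin>r" using max_elem Suc.prems by blast
  let ?S = "S - {m0}"
  have c: "card ?S = m" using Suc m0 by simp
  obtain f where f: "bij_betw f ?S {k+1..k+card ?S}" "\<forall>u\<in>?S. \<forall>v\<in>?S. (u,v)\<in>r \<longrightarrow> f v < f u"
    using Suc.hyps(1)[OF c[symmetric]] Suc.prems by auto
  let ?g = "f(m0 := k + card S)"
  have "bij_betw ?g ?S {k+1..k+card ?S}" using f(1)
    by (rule bij_betw_cong[THEN iffD1, rotated]) auto
  hence "bij_betw ?g (?S \<union> {m0}) ({k+1..k+card ?S} \<union> {?g m0})"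
    using notIn_Un_bij_betw3[of m0 ?S ?g "{k+1..k+card ?S}"] c Suc.hyps(2) by auto
  moreover have "?S \<union> {m0} = S" using m0 by auto
  moreover have "{k+1..k+card ?S} \<union> {?g m0} = {k+1..k+card S}" using c Suc.hyps(2) by auto
  ultimately have b: "bij_betw ?g S {k+1..k+card S}" by simp
  have "\<forall>u\<in>S. \<forall>v\<in>S. (u,v)\<in>r \<longrightarrow> ?g v < ?g u"
  proof (intro ballI impI)
    fix u v assume uv: "u \<in> S" "v \<in> S" "(u,v) \<in> r"
    show "?g v < ?g u"
    proof (cases "u = m0")
      case True
      then have "v \<noteq> m0" using uv Suc.prems by auto
      then have "f v \<in> {k+1..k+card ?S}" using f(1) uv bij_betwE by fastforce
      then show ?thesis using True \<open>v \<noteq> m0\<close> c Suc.hyps(2) by auto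
    next
      case False
      then have "v \<noteq> m0" using uv m0 by auto
      then show ?thesis using False f(2) uv by auto
    qed
  qed
  with b show ?case by blast
qed

lemma three:
  assumes sub: "X \<subseteq> {1..n}" "Y \<subseteq> {1..n}" "i \<in> {1..n}" "X \<union> {i} \<union> Y = {1..n}"
    and dis: "i \<notin> X" "i \<notin> Y" "X \<inter> Y = {}"
    and tr: "trans r" "\<forall>x. (x,x)\<notin>r" "E \<subseteq> r" "E \<subseteq> {1..n} \<times> {1..n}"
    and ex1: "\<forall>u v. (u,v)\<in>E \<longrightarrow> u \<in> X \<longrightarrow> v \<in> X"
    and ex2: "\<forall>v. (i,v)\<in>E \<longrightarrow> v \<notin> Y"
  shows "\<exists>\<sigma>\<in>satisfying_perms n E. \<sigma> i = card X + 1"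
proof -
  have finX: "finite X" and finY: "finite Y" using sub finite_subset by blast+
  have cn: "card X + 1 + card Y = n"
  proof -
    have "card (X \<union> {i} \<union> Y) = card X + 1 + card Y"
      using finX finY dis by (simp add: card_Un_disjoint)
    thus ?thesis using sub(4) by simp
  qed
  obtain f where f: "bij_betw f X {0+1..0+card X}" "\<forall>u\<in>X. \<forall>v\<in>X. (u,v)\<in>r \<longrightarrow> f v < f u"
    using linext[OF finX tr(1,2)] by blast
  obtain g where g: "bij_betw g Y {(card X + 1)+1..(card X + 1)+card Y}"
     "\<forall>u\<in>Y. \<forall>v\<in>Y. (u,v)\<in>r \<longrightarrow> g v < g u"
    using linext[OF finY tr(1,2)] by blast
  define \<sigma> where "\<sigma> x = (if x \<in> X then f x else if x = i then card X + 1 else if x \<in> Y then g x else x)" for x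
  have f1: "bij_betw f X {1..card X}" using f(1) by simp
  have b1: "bij_betw \<sigma> X {1..card X}"
    using f1 by (rule bij_betw_cong[THEN iffD1, rotated]) (auto simp: \<sigma>_def)
  have b2: "bij_betw \<sigma> Y {card X + 2..n}"
  proof -
    have "bij_betw \<sigma> Y {(card X + 1)+1..(card X + 1)+card Y}"
      using g(1) by (rule bij_betw_cong[THEN iffD1, rotated]) (use dis in \<open>auto simp: \<sigma>_def\<close>)
    thus ?thesis using cn by (simp add: add.commute)
  qed
  have b3: "bij_betw \<sigma> {i} {card X + 1}" by (auto simp: \<sigma>_def bij_betw_def dis)
  have "bij_betw \<sigma> (X \<union> {i} \<union> Y) ({1..card X} \<union> {card X + 1} \<union> {card X + 2..n})"
    by (rule bij_betw_combine[OF bij_betw_combine[OF b1 b3] b2]) auto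
  moreover have "{1..card X} \<union> {card X + 1} \<union> {card X + 2..n} = {1..n}" using cn by auto
  ultimately have "bij_betw \<sigma> {1..n} {1..n}" using sub(4) by simp
  moreover have "\<And>x. x \<notin> {1..n} \<Longrightarrow> \<sigma> x = x" using sub by (auto simp: \<sigma>_def)
  ultimately have perm: "\<sigma> permutes {1..n}" by (rule bij_imp_permutes)
  have sX: "\<And>x. x \<in> X \<Longrightarrow> \<sigma> x \<le> card X" using b1 bij_betwE by fastforce
  have sY: "\<And>x. x \<in> Y \<Longrightarrow> \<sigma> x \<ge> card X + 2" using b2 bij_betwE by fastforce
  have "\<forall>(u,v)\<in>E. \<sigma> u > \<sigma> v"
  proof (clarify)
    fix u v assume e: "(u,v) \<in> E"
    have uv: "u \<in> X \<union> {i} \<union> Y" "v \<in> X \<union> {i} \<union> Y" using e tr(4) sub(4) by auto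
    have ruv: "(u,v) \<in> r" using e tr(3) by auto
    have neq: "u \<noteq> v" using ruv tr(2) by auto
    show "\<sigma> v < \<sigma> u"
    proof (cases "u \<in> X")
      case True
      then have "v \<in> X" using ex1 e by blast
      then show ?thesis using True f(2) ruv by (simp add: \<sigma>_def)
    next
      case nX: False
      show ?thesis
      proof (cases "u = i")
        case True
        then have "v \<in> X" using ex2 e uv neq by blast
        then show ?thesis using sX[of v] True dis by (simp add: \<sigma>_def)
      next
        case False
        then have uY: "u \<in> Y" using uv nX by auto
        have "v \<in> X \<or> v = i \<or> v \<in> Y" using uv by auto
        then show ?thesis
        proof (elim disjE)
          assume "v \<in> X" then show ?thesis using sX[of v] sY[OF uY] by simp
        next
          assume "v = i" then show ?thesis using sY[OF uY] dis by (simp add: \<sigma>_def)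
        next
          assume vY: "v \<in> Y" have "u \<notin> X" "v \<notin> X" "u \<noteq> i" "v \<noteq> i" using uY vY dis by auto
          then show ?thesis using g(2) uY vY ruv by (simp add: \<sigma>_def)
        qed
      qed
    qed
  qed
  with perm have "\<sigma> \<in> satisfying_perms n E" by (simp add: satisfying_perms_def)
  moreover have "\<sigma> i = card X + 1" using dis by (simp add: \<sigma>_def)
  ultimately show ?thesis by blast
qed

lemma sat_trancl:
  assumes "\<sigma> \<in> satisfying_perms n E" "(u,v) \<in> E\<^sup>+"
  shows "\<sigma> v < \<sigma> u"
  using assms(2)
proof (induct rule: trancl_induct)
  case (base y) then show ?case using assms(1) by (auto simp: satisfying_perms_def)
next
  case (step y z) then show ?case using assms(1) by (fastforce simp: satisfying_perms_def)
qed

lemma bounds: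
  assumes s: "\<sigma> \<in> satisfying_perms n E" and j: "j \<in> {1..n}"
  shows "card (reach n E j) + 1 \<le> \<sigma> j" "\<sigma> j + card (reach_inv n E j) \<le> n"
proof -
  have p: "\<sigma> permutes {1..n}" using s by (simp add: satisfying_perms_def)
  have inj: "inj_on \<sigma> A" for A using permutes_inj[OF p] by (simp add: inj_on_def)
  have img: "\<sigma> x \<in> {1..n}" if "x \<in> {1..n}" for x using that by (simp only: permutes_in_image[OF p])
  have "\<sigma> ` reach n E j \<subseteq> {1..<\<sigma> j}"
    using img sat_trancl[OF s] by (fastforce simp: reach_def)
  hence "card (\<sigma> ` reach n E j) \<le> card {1..<\<sigma> j}" by (intro card_mono) auto
  hence "card (reach n E j) \<le> \<sigma> j - 1" using card_image[OF inj] by simp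
  moreover have "\<sigma> j \<ge> 1" using img j by auto
  ultimately show "card (reach n E j) + 1 \<le> \<sigma> j" by simp
  have "\<sigma> ` reach_inv n E j \<subseteq> {\<sigma> j<..n}"
    using img sat_trancl[OF s] by (fastforce simp: reach_inv_def)
  hence "card (\<sigma> ` reach_inv n E j) \<le> card {\<sigma> j<..n}" by (intro card_mono) auto
  hence "card (reach_inv n E j) \<le> n - \<sigma> j" using card_image[OF inj] by simp
  moreover have "\<sigma> j \<le> n" using img j by auto
  ultimately show "\<sigma> j + card (reach_inv n E j) \<le> n" by simp
qed

theorem mainTheorem5:
  fixes n :: nat and E :: "(nat \<times> nat) set"
  assumes "oriented_graph n E"
    and "card (satisfying_perms n E) \<ge> 2"
  shows "\<exists>\<sigma> \<in> satisfying_perms n E. \<exists>\<rho> \<in> satisfying_perms n E.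
           d_linf n \<sigma> \<rho> =
           Max ((\<lambda>i. int n - int (card (reach n E i)) - int (card (reach_inv n E i)) - 1) ` {1..n})"
proof -
  define F where "F i = int n - int (card (reach n E i)) - int (card (reach_inv n E i)) - 1" for i
  have "satisfying_perms n E \<noteq> {}" using assms(2) by (metis card.empty not_numeral_le_zero)
  then obtain \<sigma>0 where s0: "\<sigma>0 \<in> satisfying_perms n E" by blast
  have irr: "\<forall>x. (x,x) \<notin> E\<^sup>+" using sat_trancl[OF s0] by blast
  have Esub: "E \<subseteq> {1..n} \<times> {1..n}" using assms(1) by (simp add: oriented_graph_def)
  show ?thesis
  proof (cases "n = 0")
    case True
    then show ?thesis using s0 by (auto simp: d_linf_def)
  next
    case False
    have "F ` {1..n} \<noteq> {}" using False by simp
    then have "Max (F ` {1..n}) \<in> F ` {1..n}" by (intro Max_in) auto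
    then obtain i0 where i0: "i0 \<in> {1..n}" "F i0 = Max (F ` {1..n})" by auto
    let ?R = "reach n E i0" and ?A = "reach_inv n E i0"
    have trE: "trans (E\<^sup>+)" by simp
    have "\<exists>\<sigma>\<in>satisfying_perms n E. \<sigma> i0 = card ?R + 1"
    proof (rule three[of ?R n "{1..n} - ?R - {i0}" i0 "E\<^sup>+"])
      show "\<forall>u v. (u,v)\<in>E \<longrightarrow> u \<in> ?R \<longrightarrow> v \<in> ?R"
      proof (intro allI impI)
        fix u v assume "(u,v) \<in> E" "u \<in> ?R"
        then have "(i0,v) \<in> E\<^sup>+" "v \<in> {1..n}" using Esub by (auto simp: reach_def)
        then show "v \<in> ?R" using irr by (auto simp: reach_def)
      qed
      show "\<forall>v. (i0,v)\<in>E \<longrightarrow> v \<notin> {1..n} - ?R - {i0}"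
        using irr by (auto simp: reach_def)
    qed (use i0 irr Esub in \<open>auto simp: reach_def\<close>)
    then obtain \<sigma> where s: "\<sigma> \<in> satisfying_perms n E" "\<sigma> i0 = card ?R + 1" by blast
    have "\<exists>\<sigma>\<in>satisfying_perms n E. \<sigma> i0 = card ({1..n} - ?A - {i0}) + 1"
    proof (rule three[of "{1..n} - ?A - {i0}" n ?A i0 "E\<^sup>+"])
      show "\<forall>u v. (u,v)\<in>E \<longrightarrow> u \<in> {1..n} - ?A - {i0} \<longrightarrow> v \<in> {1..n} - ?A - {i0}"
      proof (intro allI impI)
        fix u v assume e: "(u,v) \<in> E" "u \<in> {1..n} - ?A - {i0}"
        show "v \<in> {1..n} - ?A - {i0}"
        proof (rule ccontr)
          assume "v \<notin> {1..n} - ?A - {i0}"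
          then have "v = i0 \<or> (v,i0) \<in> E\<^sup>+" using e Esub by (auto simp: reach_inv_def)
          then have "(u,i0) \<in> E\<^sup>+" using e by auto
          then show False using e by (auto simp: reach_inv_def)
        qed
      qed
      show "\<forall>v. (i0,v)\<in>E \<longrightarrow> v \<notin> ?A"
      proof (intro allI impI notI)
        fix v assume e: "(i0,v)\<in>E" and "v \<in> ?A"
        then have "(v,i0)\<in>E\<^sup>+" by (simp add: reach_inv_def)
        with e have "(i0,i0)\<in>E\<^sup>+" by (rule trancl_into_trancl2)
        then show False using irr by blast
      qed
    qed (use i0 irr Esub in \<open>auto simp: reach_inv_def\<close>)
    then obtain \<rho> where r: "\<rho> \<in> satisfying_perms n E" "\<rho> i0 = card ({1..n} - ?A - {i0}) + 1" by blast
    have "card ({1..n} - ?A - {i0}) = card ({1..n} - {i0} - ?A)" by (rule arg_cong[where f=card]) blast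
    also have "\<dots> = card ({1..n} - {i0}) - card ?A"
      by (rule card_Diff_subset) (auto simp: reach_inv_def)
    also have "\<dots> = n - 1 - card ?A" using i0 by simp
    finally have cA: "card ({1..n} - ?A - {i0}) = n - 1 - card ?A" .
    have bs: "card ?R + 1 \<le> \<sigma> i0" "\<sigma> i0 + card ?A \<le> n" using bounds[OF s(1) i0(1)] by auto
    have ri0: "\<rho> i0 = n - card ?A" using r(2) cA bs by simp
    have "d_linf n \<sigma> \<rho> = F i0"
      unfolding d_linf_def
    proof (rule Max_eqI)
      show "finite ((\<lambda>i. \<bar>int (\<sigma> i) - int (\<rho> i)\<bar>) ` {1..n})" by simp
    next
      fix y assume "y \<in> (\<lambda>i. \<bar>int (\<sigma> i) - int (\<rho> i)\<bar>) ` {1..n}"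
      then obtain j where j: "j \<in> {1..n}" "y = \<bar>int (\<sigma> j) - int (\<rho> j)\<bar>" by auto
      have b1: "card (reach n E j) + 1 \<le> \<sigma> j" "\<sigma> j + card (reach_inv n E j) \<le> n"
        using bounds[OF s(1) j(1)] by auto
      have b2: "card (reach n E j) + 1 \<le> \<rho> j" "\<rho> j + card (reach_inv n E j) \<le> n"
        using bounds[OF r(1) j(1)] by auto
      have "y \<le> F j" using b1 b2 j(2) unfolding F_def by linarith
      also have "F j \<le> F i0" using i0(2) j(1) by simp
      finally show "y \<le> F i0" .
    next
      have "\<bar>int (\<sigma> i0) - int (\<rho> i0)\<bar> = F i0"
        using s(2) ri0 bs unfolding F_def by linarith
      then show "F i0 \<in> (\<lambda>i. \<bar>int (\<sigma> i) - int (\<rho> i)\<bar>) ` {1..n}" using i0(1) by force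
    qed
    then show ?thesis using s(1) r(1) i0(2) unfolding F_def by auto
  qed
qed

end
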